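(* Let $A,B\in\mathbb{R}^{N\times N}$, $\tau>0$, $T>0$. The system $u'(t)=Au(t)+Bu(t-\tau)$ has no nontrivial $T$-periodic solutions if and only if $$h_k:=\det\begin{pmatrix}X_k & -Y_k\\ Y_k & X_k\end{pmatrix}\neq0\quad\text{for all }k\in\mathbb{N}_0,$$ where $X_k:=A+\cos(\lambda_k\tau)B$, $Y_k:=\lambda_kI+\sin(\lambda_k\tau)B$ and $\lambda_k:=2k\pi/T$. *)

theory Defs
  imports "HOL-Analysis.Analysis"
begin

definition lam :: "real \<Rightarrow> nat \<Rightarrow> real" where
  "lam T k = 2 * real k * pi / T"

definition Xk :: "real^'n^'n \<Rightarrow> real^'n^'n \<Rightarrow> real \<Rightarrow> real \<Rightarrow> nat \<Rightarrow> real^'n^'n" where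
  "Xk A B \<tau> T k = A + cos (lam T k * \<tau>) *\<^sub>R B"

definition Yk :: "real^'n^'n \<Rightarrow> real^'n^'n \<Rightarrow> real \<Rightarrow> real \<Rightarrow> nat \<Rightarrow> real^'n^'n" where
  "Yk A B \<tau> T k = lam T k *\<^sub>R mat 1 + sin (lam T k * \<tau>) *\<^sub>R B"

definition block2 :: "real^'n^'n \<Rightarrow> real^'n^'n \<Rightarrow> real^('n + 'n)^('n + 'n)" where
  "block2 P Q = (\<chi> i j. case i of
      Inl a \<Rightarrow> (case j of Inl b \<Rightarrow> P $ a $ b | Inr b \<Rightarrow> - (Q $ a $ b))
    | Inr a \<Rightarrow> (case j of Inl b \<Rightarrow> Q $ a $ b | Inr b \<Rightarrow> P $ a $ b))"

definition hk :: "real^'n^'n \<Rightarrow> real^'n^'n \<Rightarrow> real \<Rightarrow> real \<Rightarrow> nat \<Rightarrow> real" where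
  "hk A B \<tau> T k = det (block2 (Xk A B \<tau> T k) (Yk A B \<tau> T k))"

end

theory Submission
  imports Defs
begin

lemma per_nat:
  assumes "\<And>x. F (x + T) = F x"
  shows "F (x + real n * T) = F x"
proof (induction n arbitrary: x)
  case 0 then show ?case by simp
next
  case (Suc n)
  have "x + real (Suc n) * T = (x + real n * T) + T" by (simp add: distrib_right)
  then have "F (x + real (Suc n) * T) = F ((x + real n * T) + T)" by (rule arg_cong)
  also have "\<dots> = F (x + real n * T)" by (rule assms)
  also have "\<dots> = F x" by (rule Suc.IH)
  finally show ?case .
qed

lemma per_int:
  assumes "\<And>x. F (x + T) = F x"
  shows "F (x + real_of_int n * T) = F x"
proof (cases "n \<ge> 0")
  case True
  then have e: "real (nat n) = real_of_int n" by simp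
  have "F (x + real (nat n) * T) = F x" by (rule per_nat) (rule assms)
  then show ?thesis unfolding e .
next
  case False
  then have e: "real_of_int n = - real (nat (-n))" by simp
  have "F ((x + real_of_int n * T) + real (nat (-n)) * T) = F (x + real_of_int n * T)"
    by (rule per_nat) (rule assms)
  moreover have "(x + real_of_int n * T) + real (nat (-n)) * T = x" unfolding e by (simp add: algebra_simps)
  ultimately show ?thesis by metis
qed

lemma per_red:
  assumes "\<And>x. F (x + T) = F x" "T > 0"
  shows "F x = F (x - real_of_int \<lfloor>x/T\<rfloor> * T)" and "x - real_of_int \<lfloor>x/T\<rfloor> * T \<in> {0..<T}"
proof -
  have "F ((x - real_of_int \<lfloor>x/T\<rfloor> * T) + real_of_int \<lfloor>x/T\<rfloor> * T) = F (x - real_of_int \<lfloor>x/T\<rfloor> * T)"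
    by (rule per_int) (rule assms(1))
  then show "F x = F (x - real_of_int \<lfloor>x/T\<rfloor> * T)" by (simp only: diff_add_cancel)
  have e: "x - real_of_int \<lfloor>x/T\<rfloor> * T = frac (x/T) * T"
    using assms(2) by (simp add: frac_def algebra_simps)
  have "0 \<le> frac (x/T) * T" using assms(2) frac_ge_0 by simp
  moreover have "frac (x/T) * T < 1 * T" using assms(2) frac_lt_1 by (intro mult_strict_right_mono) auto
  ultimately show "x - real_of_int \<lfloor>x/T\<rfloor> * T \<in> {0..<T}" unfolding e by simp
qed

lemma per_integral:
  fixes f :: "real \<Rightarrow> 'a::euclidean_space"
  assumes c: "continuous_on UNIV f" and p: "\<And>x. f (x + T) = f x" and T: "T > 0"
  shows "integral {a..a+T} f = integral {0..T} f"
proof -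
  define H where "H a = integral {a..a+T} f" for a
  have int: "f integrable_on {x..y}" for x y
    by (rule integrable_continuous_real) (use c continuous_on_subset in blast)
  have sh: "integral {x+T..y+T} f = integral {x..y} f" for x y
  proof -
    have "integral {(x+T)-T..(y+T)-T} (\<lambda>t. f (t + T)) = integral {x+T..y+T} f"
      by (rule integral_shift_real_ivl)
    then show ?thesis using p by simp
  qed
  have Hp: "H (a + T) = H a" for a
    unfolding H_def using sh[of a "a+T"] by (simp add: algebra_simps)
  have H0: "H a = H 0" if "a \<in> {0..<T}" for a
  proof -
    have "integral {a..T} f + integral {T..a+T} f = integral {a..a+T} f"
      by (rule Henstock_Kurzweil_Integration.integral_combine) (use that in \<open>simp_all add: int\<close>)
    moreover have "integral {T..a+T} f = integral {0..a} f" using sh[of 0 a] by simp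
    moreover have "integral {0..a} f + integral {a..T} f = integral {0..T} f"
      by (rule Henstock_Kurzweil_Integration.integral_combine) (use that in \<open>simp_all add: int\<close>)
    ultimately have "integral {a..a+T} f = integral {0..T} f" by (metis add.commute)
    then show ?thesis unfolding H_def by simp
  qed
  have "H a = H (a - real_of_int \<lfloor>a/T\<rfloor> * T)" by (rule per_red(1)[of H T, OF Hp T])
  also have "\<dots> = H 0" by (rule H0[OF per_red(2)[of H T, OF Hp T]])
  finally show ?thesis unfolding H_def by (simp only: add_0_left)
qed


definition om :: "real \<Rightarrow> real" where "om T = 2*pi/T"

definition PP :: "(real \<Rightarrow> real) \<Rightarrow> real \<Rightarrow> (real \<Rightarrow> real) \<Rightarrow> bool" where
  "PP w T h \<longleftrightarrow> continuous_on UNIV h \<and>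
     (\<forall>k::int. integral {0..T} (\<lambda>t. w t * h t * cos (of_int k * (om T * t))) = 0 \<and>
               integral {0..T} (\<lambda>t. w t * h t * sin (of_int k * (om T * t))) = 0)"

lemma cint: "continuous_on UNIV (g::real\<Rightarrow>real) \<Longrightarrow> g integrable_on {a..b}"
  by (rule integrable_continuous_real) (use continuous_on_subset in blast)

lemma int_comb:
  fixes g1 g2 :: "real \<Rightarrow> real"
  assumes "continuous_on UNIV g1" "continuous_on UNIV g2"
  shows "integral {a..b} (\<lambda>t. c1 * g1 t + c2 * g2 t) = c1 * integral {a..b} g1 + c2 * integral {a..b} g2"
proof -
  have i1: "(\<lambda>t. c1 * g1 t) integrable_on {a..b}" using cint[OF assms(1)] by (rule integrable_on_mult_right)
  have i2: "(\<lambda>t. c2 * g2 t) integrable_on {a..b}" using cint[OF assms(2)] by (rule integrable_on_mult_right)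
  show ?thesis using Henstock_Kurzweil_Integration.integral_add[OF i1 i2] by simp
qed

lemma trig_aux: "of_int (k+1) * (a::real) = of_int k * a + a" "of_int (k-1) * (a::real) = of_int k * a - a"
  by (simp_all add: algebra_simps)
lemma trig_cc: "cos a * cos (of_int k * (a::real)) = (cos (of_int (k+1) * a) + cos (of_int (k-1) * a)) / 2"
  unfolding trig_aux by (simp add: cos_add cos_diff algebra_simps)
lemma trig_sc: "sin a * cos (of_int k * (a::real)) = (sin (of_int (k+1) * a) - sin (of_int (k-1) * a)) / 2"
  unfolding trig_aux by (simp add: sin_add sin_diff algebra_simps)
lemma trig_cs: "cos a * sin (of_int k * (a::real)) = (sin (of_int (k+1) * a) + sin (of_int (k-1) * a)) / 2"
  unfolding trig_aux by (simp add: sin_add sin_diff algebra_simps)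
lemma trig_ss: "sin a * sin (of_int k * (a::real)) = (cos (of_int (k-1) * a) - cos (of_int (k+1) * a)) / 2"
  unfolding trig_aux by (simp add: cos_add cos_diff algebra_simps)

lemma pw_plus: "c * d = (p + q) / 2 \<Longrightarrow> (x::real) * (y * c) * d = (1/2) * (x*y*p) + (1/2) * (x*y*q)"
proof -
  assume h: "c * d = (p + q) / 2"
  have "(1/2) * (x*y*p) + (1/2) * (x*y*q) = x*y*((p+q)/2)" by (simp add: algebra_simps)
  also have "\<dots> = x*y*(c*d)" using h by simp
  finally show ?thesis by (simp only: mult_ac)
qed

lemma pw_minus: "c * d = (p - q) / 2 \<Longrightarrow> (x::real) * (y * c) * d = (1/2) * (x*y*p) + (-1/2) * (x*y*q)"
proof -
  assume h: "c * d = (p - q) / 2"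
  have "(1/2) * (x*y*p) + (-1/2) * (x*y*q) = x*y*((p-q)/2)" by (simp add: algebra_simps)
  also have "\<dots> = x*y*(c*d)" using h by simp
  finally show ?thesis by (simp only: mult_ac)
qed

lemma PP_cont: "PP w T h \<Longrightarrow> continuous_on UNIV h" unfolding PP_def by simp
lemma PP_c: "PP w T h \<Longrightarrow> integral {0..T} (\<lambda>t. w t * h t * cos (of_int k * (om T * t))) = 0"
  unfolding PP_def by simp
lemma PP_s: "PP w T h \<Longrightarrow> integral {0..T} (\<lambda>t. w t * h t * sin (of_int k * (om T * t))) = 0"
  unfolding PP_def by simp

lemma PP_intro:
  assumes "continuous_on UNIV h"
    "\<And>k. integral {0..T} (\<lambda>t. w t * h t * cos (of_int k * (om T * t))) = 0"
    "\<And>k. integral {0..T} (\<lambda>t. w t * h t * sin (of_int k * (om T * t))) = 0"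
  shows "PP w T h"
  unfolding PP_def using assms by simp

lemma PP_add:
  assumes w: "continuous_on UNIV w" and P1: "PP w T h1" and P2: "PP w T h2"
  shows "PP w T (\<lambda>t. h1 t + h2 t)"
proof -
  have h1: "continuous_on UNIV h1" and h2: "continuous_on UNIV h2" using P1 P2 by (simp_all add: PP_cont)
  have key: "integral {0..T} (\<lambda>t. w t * (h1 t + h2 t) * F t) =
     1 * integral {0..T} (\<lambda>t. w t * h1 t * F t) + 1 * integral {0..T} (\<lambda>t. w t * h2 t * F t)"
    if F: "continuous_on UNIV F" for F
  proof -
    have "integral {0..T} (\<lambda>t. w t * (h1 t + h2 t) * F t) =
        integral {0..T} (\<lambda>t. 1 * (w t * h1 t * F t) + 1 * (w t * h2 t * F t))"
      by (rule integral_cong) (simp add: algebra_simps)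
    also have "\<dots> = 1 * integral {0..T} (\<lambda>t. w t * h1 t * F t) + 1 * integral {0..T} (\<lambda>t. w t * h2 t * F t)"
      by (rule int_comb) (intro continuous_intros w h1 h2 F)+
    finally show ?thesis .
  qed
  show ?thesis
  proof (rule PP_intro)
    show "continuous_on UNIV (\<lambda>t. h1 t + h2 t)" by (intro continuous_intros h1 h2)
    fix k :: int
    have c: "continuous_on UNIV (\<lambda>t. cos (of_int k * (om T * t)))" by (intro continuous_intros)
    show "integral {0..T} (\<lambda>t. w t * (h1 t + h2 t) * cos (of_int k * (om T * t))) = 0"
      using key[OF c] PP_c[OF P1, of k] PP_c[OF P2, of k] by simp
    have s: "continuous_on UNIV (\<lambda>t. sin (of_int k * (om T * t)))" by (intro continuous_intros)
    show "integral {0..T} (\<lambda>t. w t * (h1 t + h2 t) * sin (of_int k * (om T * t))) = 0"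
      using key[OF s] PP_s[OF P1, of k] PP_s[OF P2, of k] by simp
  qed
qed

lemma PP_cmul:
  assumes w: "continuous_on UNIV w" and P: "PP w T h"
  shows "PP w T (\<lambda>t. c * h t)"
proof -
  have h: "continuous_on UNIV h" using P by (simp add: PP_cont)
  have key: "integral {0..T} (\<lambda>t. w t * (c * h t) * F t) = c * integral {0..T} (\<lambda>t. w t * h t * F t)" for F
  proof -
    have "integral {0..T} (\<lambda>t. w t * (c * h t) * F t) = integral {0..T} (\<lambda>t. c * (w t * h t * F t))"
      by (rule integral_cong) (simp add: algebra_simps)
    then show ?thesis by simp
  qed
  show ?thesis
  proof (rule PP_intro)
    show "continuous_on UNIV (\<lambda>t. c * h t)" by (intro continuous_intros h)
    fix k :: int
    show "integral {0..T} (\<lambda>t. w t * (c * h t) * cos (of_int k * (om T * t))) = 0"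
      using key PP_c[OF P, of k] by simp
    show "integral {0..T} (\<lambda>t. w t * (c * h t) * sin (of_int k * (om T * t))) = 0"
      using key PP_s[OF P, of k] by simp
  qed
qed

lemma PP_cos:
  assumes w: "continuous_on UNIV w" and P: "PP w T h"
  shows "PP w T (\<lambda>t. h t * cos (om T * t))"
proof (rule PP_intro)
  have h: "continuous_on UNIV h" using P by (simp add: PP_cont)
  show "continuous_on UNIV (\<lambda>t. h t * cos (om T * t))" by (intro continuous_intros h)
  fix k :: int
  have "integral {0..T} (\<lambda>t. w t * (h t * cos (om T * t)) * cos (of_int k * (om T * t))) =
     integral {0..T} (\<lambda>t. (1/2) * (w t * h t * cos (of_int (k+1) * (om T * t))) + (1/2) * (w t * h t * cos (of_int (k-1) * (om T * t))))"
    by (rule integral_cong) (rule pw_plus, rule trig_cc)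
  also have "\<dots> = (1/2) * integral {0..T} (\<lambda>t. w t * h t * cos (of_int (k+1) * (om T * t))) + (1/2) * integral {0..T} (\<lambda>t. w t * h t * cos (of_int (k-1) * (om T * t)))"
    by (rule int_comb) (intro continuous_intros w h)+
  finally show "integral {0..T} (\<lambda>t. w t * (h t * cos (om T * t)) * cos (of_int k * (om T * t))) = 0"
    using PP_c[OF P, of "k+1"] PP_c[OF P, of "k-1"] by simp
  have "integral {0..T} (\<lambda>t. w t * (h t * cos (om T * t)) * sin (of_int k * (om T * t))) =
     integral {0..T} (\<lambda>t. (1/2) * (w t * h t * sin (of_int (k+1) * (om T * t))) + (1/2) * (w t * h t * sin (of_int (k-1) * (om T * t))))"
    by (rule integral_cong) (rule pw_plus, rule trig_cs)
  also have "\<dots> = (1/2) * integral {0..T} (\<lambda>t. w t * h t * sin (of_int (k+1) * (om T * t))) + (1/2) * integral {0..T} (\<lambda>t. w t * h t * sin (of_int (k-1) * (om T * t)))"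
    by (rule int_comb) (intro continuous_intros w h)+
  finally show "integral {0..T} (\<lambda>t. w t * (h t * cos (om T * t)) * sin (of_int k * (om T * t))) = 0"
    using PP_s[OF P, of "k+1"] PP_s[OF P, of "k-1"] by simp
qed

lemma PP_sin:
  assumes w: "continuous_on UNIV w" and P: "PP w T h"
  shows "PP w T (\<lambda>t. h t * sin (om T * t))"
proof (rule PP_intro)
  have h: "continuous_on UNIV h" using P by (simp add: PP_cont)
  show "continuous_on UNIV (\<lambda>t. h t * sin (om T * t))" by (intro continuous_intros h)
  fix k :: int
  have "integral {0..T} (\<lambda>t. w t * (h t * sin (om T * t)) * cos (of_int k * (om T * t))) =
     integral {0..T} (\<lambda>t. (1/2) * (w t * h t * sin (of_int (k+1) * (om T * t))) + (-1/2) * (w t * h t * sin (of_int (k-1) * (om T * t))))"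
    by (rule integral_cong) (rule pw_minus, rule trig_sc)
  also have "\<dots> = (1/2) * integral {0..T} (\<lambda>t. w t * h t * sin (of_int (k+1) * (om T * t))) + (-1/2) * integral {0..T} (\<lambda>t. w t * h t * sin (of_int (k-1) * (om T * t)))"
    by (rule int_comb) (intro continuous_intros w h)+
  finally show "integral {0..T} (\<lambda>t. w t * (h t * sin (om T * t)) * cos (of_int k * (om T * t))) = 0"
    using PP_s[OF P, of "k+1"] PP_s[OF P, of "k-1"] by simp
  have "integral {0..T} (\<lambda>t. w t * (h t * sin (om T * t)) * sin (of_int k * (om T * t))) =
     integral {0..T} (\<lambda>t. (1/2) * (w t * h t * cos (of_int (k-1) * (om T * t))) + (-1/2) * (w t * h t * cos (of_int (k+1) * (om T * t))))"
    by (rule integral_cong) (rule pw_minus, rule trig_ss)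
  also have "\<dots> = (1/2) * integral {0..T} (\<lambda>t. w t * h t * cos (of_int (k-1) * (om T * t))) + (-1/2) * integral {0..T} (\<lambda>t. w t * h t * cos (of_int (k+1) * (om T * t)))"
    by (rule int_comb) (intro continuous_intros w h)+
  finally show "integral {0..T} (\<lambda>t. w t * (h t * sin (om T * t)) * sin (of_int k * (om T * t))) = 0"
    using PP_c[OF P, of "k+1"] PP_c[OF P, of "k-1"] by simp
qed

lemma PP_poly:
  assumes w: "continuous_on UNIV w"
  shows "real_polynomial_function g \<Longrightarrow> PP w T h \<Longrightarrow> PP w T (\<lambda>t. h t * g (cis (om T * t)))"
proof (induction g arbitrary: h rule: real_polynomial_function.induct)
  case (linear f)
  have e: "f z = Re z * f 1 + Im z * f \<i>" for z
  proof -
    have "z = Re z *\<^sub>R 1 + Im z *\<^sub>R \<i>" by (simp add: complex_eq_iff)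
    then have "f z = f (Re z *\<^sub>R 1 + Im z *\<^sub>R \<i>)" by (rule arg_cong)
    also have "\<dots> = Re z * f 1 + Im z * f \<i>"
      using bounded_linear.linear[OF linear.hyps] by (simp add: linear_add linear_scale)
    finally show ?thesis .
  qed
  have "(\<lambda>t. h t * f (cis (om T * t))) = (\<lambda>t. f 1 * (h t * cos (om T * t)) + f \<i> * (h t * sin (om T * t)))"
  proof (rule ext)
    fix t
    have "f (cis (om T * t)) = cos (om T * t) * f 1 + sin (om T * t) * f \<i>" using e[of "cis (om T * t)"] by simp
    then show "h t * f (cis (om T * t)) = f 1 * (h t * cos (om T * t)) + f \<i> * (h t * sin (om T * t))"
      by (simp add: algebra_simps)
  qed
  then show ?case using PP_add[OF w PP_cmul[OF w PP_cos[OF w linear.prems]] PP_cmul[OF w PP_sin[OF w linear.prems]]]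
    by simp
next
  case (const c)
  have "(\<lambda>t. h t * c) = (\<lambda>t. c * h t)" by (rule ext) simp
  then show ?case using PP_cmul[OF w const.prems] by simp
next
  case (add f1 f2)
  have "(\<lambda>t. h t * (f1 (cis (om T * t)) + f2 (cis (om T * t)))) =
      (\<lambda>t. h t * f1 (cis (om T * t)) + h t * f2 (cis (om T * t)))" by (rule ext) (simp add: algebra_simps)
  then show ?case using PP_add[OF w add.IH(1)[OF add.prems] add.IH(2)[OF add.prems]] by simp
next
  case (mult f1 f2)
  have "PP w T (\<lambda>t. h t * f1 (cis (om T * t)))" by (rule mult.IH(1)[OF mult.prems])
  then have "PP w T (\<lambda>t. (h t * f1 (cis (om T * t))) * f2 (cis (om T * t)))" by (rule mult.IH(2))
  then show ?case by (simp add: mult.assoc)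
qed

lemma lam_om: "lam T n * t = real n * (om T * t)" by (simp add: lam_def om_def)

lemma cos_int_lam: "cos (of_int k * (om T * t)) = cos (lam T (nat \<bar>k\<bar>) * t)"
proof (cases "k \<ge> 0")
  case True then have "of_int k = real (nat \<bar>k\<bar>)" by simp
  then show ?thesis by (simp add: lam_om)
next
  case False then have "of_int k = - real (nat \<bar>k\<bar>)" by simp
  then show ?thesis by (simp add: lam_om)
qed

lemma sin_int_lam: "sin (of_int k * (om T * t)) = (if k \<ge> 0 then 1 else -1) * sin (lam T (nat \<bar>k\<bar>) * t)"
proof (cases "k \<ge> 0")
  case True then have "of_int k = real (nat \<bar>k\<bar>)" by simp
  then show ?thesis using True by (simp add: lam_om)
next
  case False then have "of_int k = - real (nat \<bar>k\<bar>)" by simp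
  then show ?thesis using False by (simp add: lam_om)
qed


lemma Arg2pi_Arg_per:
  assumes z: "z \<noteq> 0"
  shows "Arg2pi z = Arg z \<or> Arg2pi z = Arg z + 2*pi"
proof -
  have a2: "is_Arg z (Arg2pi z)" "0 \<le> Arg2pi z" "Arg2pi z < 2*pi" using Arg2pi[of z] by auto
  have a1: "is_Arg z (Arg z)" using is_Arg_Arg[OF z] .
  have b: "-pi < Arg z" "Arg z \<le> pi" using mpi_less_Arg Arg_le_pi by auto
  show ?thesis
  proof (cases "Arg z \<ge> 0")
    case True
    have "Arg2pi z = Arg z" by (rule is_Arg_eqI[OF a2(1) a1 _ z]) (use True a2 b in auto)
    then show ?thesis by simp
  next
    case False
    have "is_Arg z (Arg z + of_int 1 * (2*pi))" using is_Arg_2pi_iff a1 by blast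
    then have a3: "is_Arg z (Arg z + 2*pi)" by simp
    have "Arg2pi z = Arg z + 2*pi" by (rule is_Arg_eqI[OF a2(1) a3 _ z]) (use False a2 b in auto)
    then show ?thesis by simp
  qed
qed

lemma fourier_unique:
  fixes w :: "real \<Rightarrow> real"
  assumes w: "continuous_on UNIV w" and per: "\<And>x. w (x + T) = w x" and T: "T > 0"
    and hc: "\<And>k. integral {0..T} (\<lambda>t. w t * cos (lam T k * t)) = 0"
    and hs: "\<And>k. integral {0..T} (\<lambda>t. w t * sin (lam T k * t)) = 0"
  shows "w x = 0"
proof -
  have omT: "om T > 0" "2*pi / om T = T" "om T * T = 2*pi" using T by (auto simp: om_def)
  have P1: "PP w T (\<lambda>t. 1)"
  proof (rule PP_intro)
    show "continuous_on UNIV (\<lambda>t. 1::real)" by simp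
    fix k :: int
    show "integral {0..T} (\<lambda>t. w t * 1 * cos (of_int k * (om T * t))) = 0"
      using hc[of "nat \<bar>k\<bar>"] by (simp add: cos_int_lam)
    define c :: real where "c = (if k \<ge> 0 then 1 else -1)"
    have "(\<lambda>t. w t * 1 * sin (of_int k * (om T * t))) = (\<lambda>t. c * (w t * sin (lam T (nat \<bar>k\<bar>) * t)))"
      unfolding sin_int_lam c_def by (rule ext) simp
    then show "integral {0..T} (\<lambda>t. w t * 1 * sin (of_int k * (om T * t))) = 0"
      using hs[of "nat \<bar>k\<bar>"] by simp
  qed
  have P2: "integral {0..T} (\<lambda>t. w t * g (cis (om T * t))) = 0" if g: "real_polynomial_function g" for g
  proof -
    have "PP w T (\<lambda>t. 1 * g (cis (om T * t)))" by (rule PP_poly[OF w g P1])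
    from PP_c[OF this, of 0] show ?thesis by simp
  qed
  define f where "f z = w (Arg2pi z / om T)" for z
  have fArg: "f z = w (Arg z / om T)" if "z \<noteq> 0" for z
  proof -
    from Arg2pi_Arg_per[OF that] show ?thesis
    proof
      assume "Arg2pi z = Arg z" then show ?thesis by (simp add: f_def)
    next
      assume e: "Arg2pi z = Arg z + 2*pi"
      have "Arg2pi z / om T = Arg z / om T + T" unfolding e using omT by (simp add: add_divide_distrib)
      then show ?thesis unfolding f_def using per by simp
    qed
  qed
  have wc: "isCont w y" for y using w by (simp add: continuous_on_eq_continuous_at)
  have fc: "continuous_on (sphere 0 1) f"
  proof (rule continuous_at_imp_continuous_on, rule ballI)
    fix z :: complex assume "z \<in> sphere 0 1"
    then have z0: "z \<noteq> 0" by auto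
    show "isCont f z"
    proof (cases "z \<in> \<real>\<^sub>\<ge>\<^sub>0")
      case False
      have "isCont (\<lambda>z. Arg2pi z / om T) z" using omT by (intro continuous_intros continuous_at_Arg2pi False) auto
      then have "isCont (\<lambda>z. w (Arg2pi z / om T)) z" using wc by (rule isCont_o2)
      then show ?thesis unfolding f_def .
    next
      case True
      then have nz: "z \<notin> \<real>\<^sub>\<le>\<^sub>0" using z0 by (auto simp: complex_nonneg_Reals_iff complex_nonpos_Reals_iff complex_eq_iff)
      have "isCont (\<lambda>z. Arg z / om T) z" using omT by (intro continuous_intros continuous_at_Arg nz) auto
      then have c2: "isCont (\<lambda>z. w (Arg z / om T)) z" using wc by (rule isCont_o2)
      have "eventually (\<lambda>y. f y = w (Arg y / om T)) (nhds z)"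
        unfolding eventually_nhds
        by (rule exI[of _ "- {0}"]) (use z0 fArg in auto)
      from isCont_cong[OF this] c2 show ?thesis by simp
    qed
  qed
  have fcis: "f (cis (om T * t)) = w t" for t
  proof -
    define t' where "t' = t - real_of_int \<lfloor>t/T\<rfloor> * T"
    have wt: "w t = w t'" unfolding t'_def by (rule per_red(1)[of w T, OF per T])
    have t': "t' \<in> {0..<T}" unfolding t'_def by (rule per_red(2)[of w T, OF per T])
    have "om T * t = om T * t' + 2 * pi * real_of_int \<lfloor>t/T\<rfloor>"
      unfolding t'_def using omT by (simp add: algebra_simps)
    then have "cis (om T * t) = cis (om T * t') * cis (2 * pi * real_of_int \<lfloor>t/T\<rfloor>)"
      by (simp only: cis_mult)
    also have "cis (2 * pi * real_of_int \<lfloor>t/T\<rfloor>) = 1" by (rule cis_multiple_2pi) simp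
    finally have cc: "cis (om T * t) = cis (om T * t')" by simp
    have "Arg2pi (cis (om T * t')) = om T * t'"
    proof (rule Arg2pi_unique[where r=1])
      show "complex_of_real 1 * exp (\<i> * complex_of_real (om T * t')) = cis (om T * t')"
        by (simp add: cis_conv_exp)
      show "0 \<le> om T * t'" using t' omT by simp
      have "om T * t' < om T * T" using t' omT by (intro mult_strict_left_mono) auto
      then show "om T * t' < 2 * pi" using omT by simp
    qed simp
    then show ?thesis unfolding f_def cc wt using omT by simp
  qed
  define I where "I = integral {0..T} (\<lambda>t. w t * w t)"
  define K where "K = integral {0..T} (\<lambda>t. \<bar>w t\<bar>)"
  have wwc: "continuous_on UNIV (\<lambda>t. w t * w t)" by (intro continuous_intros w)
  have I0: "0 \<le> I" unfolding I_def by (rule integral_nonneg) (use cint[OF wwc] in auto)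
  have K0: "0 \<le> K" unfolding K_def
    by (rule integral_nonneg) (use cint[of "\<lambda>t. \<bar>w t\<bar>"] w in \<open>auto intro: continuous_intros\<close>)
  have Ie: "I \<le> e * K" if e: "e > 0" for e
  proof -
    obtain g where g: "real_polynomial_function g" and ge: "\<And>z. z \<in> sphere 0 1 \<Longrightarrow> \<bar>f z - g z\<bar> < e"
      using Stone_Weierstrass_real_polynomial_function[OF compact_sphere fc e] by blast
    have gc: "continuous_on UNIV g" using g by (simp add: continuous_on_polymonial_function real_polynomial_function_eq)
    have gcc: "continuous_on UNIV (\<lambda>t. g (cis (om T * t)))"
      by (rule continuous_on_compose2[OF gc]) (auto intro: continuous_intros)
    have "I = I - integral {0..T} (\<lambda>t. w t * g (cis (om T * t)))" using P2[OF g] by simp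
    also have "\<dots> = integral {0..T} (\<lambda>t. w t * w t - w t * g (cis (om T * t)))"
      unfolding I_def by (rule integral_diff[symmetric]) (intro cint continuous_intros w gcc)+
    also have "\<dots> \<le> norm \<dots>" by simp
    also have "\<dots> \<le> integral {0..T} (\<lambda>t. e * \<bar>w t\<bar>)"
    proof (rule Henstock_Kurzweil_Integration.integral_norm_bound_integral)
      show "(\<lambda>t. w t * w t - w t * g (cis (om T * t))) integrable_on {0..T}"
        by (intro cint continuous_intros w gcc)
      show "(\<lambda>t. e * \<bar>w t\<bar>) integrable_on {0..T}" by (intro cint continuous_intros w)
      fix t
      have "cis (om T * t) \<in> sphere 0 1" by simp
      from ge[OF this] have "\<bar>w t - g (cis (om T * t))\<bar> \<le> e" unfolding fcis by simp
      then have "\<bar>w t\<bar> * \<bar>w t - g (cis (om T * t))\<bar> \<le> \<bar>w t\<bar> * e" by (rule mult_left_mono) simp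
      then show "norm (w t * w t - w t * g (cis (om T * t))) \<le> e * \<bar>w t\<bar>"
        by (simp add: abs_mult right_diff_distrib[symmetric] mult.commute)
    qed
    also have "\<dots> = e * K" unfolding K_def by simp
    finally show ?thesis .
  qed
  have "I = 0"
  proof (rule ccontr)
    assume "I \<noteq> 0"
    then have Ip: "I > 0" using I0 by simp
    have "I \<le> (I / (2 * (K + 1))) * K" by (rule Ie) (use Ip K0 in simp)
    also have "\<dots> < I"
    proof -
      have "0 \<le> I * K" using Ip K0 by simp
      then have "0 < I * K + I * 2" using Ip by linarith
      then show ?thesis using Ip K0 by (simp add: field_simps)
    qed
    finally show False by simp
  qed
  then have hi: "((\<lambda>t. w t * w t) has_integral 0) (cbox 0 T)"
    unfolding I_def using cint[OF wwc, of 0 T] by (metis box_real(2) has_integral_integral)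
  have zero: "w y = 0" if "y \<in> {0..T}" for y
  proof -
    have "w y * w y = 0"
      by (rule has_integral_0_cbox_imp_0[OF _ _ hi]) (use that T wwc continuous_on_subset in auto)
    then show ?thesis by simp
  qed
  show ?thesis using per_red[of w T x, OF per T] zero by auto
qed


definition vl :: "real^('n+'n) \<Rightarrow> real^'n" where "vl v = (\<chi> a. v $ Inl a)"
definition vr :: "real^('n+'n) \<Rightarrow> real^'n" where "vr v = (\<chi> a. v $ Inr a)"
definition vj :: "real^'n \<Rightarrow> real^'n \<Rightarrow> real^('n+'n)" where
  "vj x y = (\<chi> i. case i of Inl a \<Rightarrow> x $ a | Inr a \<Rightarrow> y $ a)"

lemma sum_UNIV_Plus:
  "sum f (UNIV :: ('a::finite + 'b::finite) set) = (\<Sum>a\<in>UNIV. f (Inl a)) + (\<Sum>b\<in>UNIV. f (Inr b))"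
proof -
  have "sum f (UNIV :: ('a + 'b) set) = sum f (Inl ` UNIV \<union> Inr ` UNIV)" by (simp only: UNIV_sum[symmetric])
  also have "\<dots> = sum f (Inl ` (UNIV::'a set)) + sum f (Inr ` (UNIV::'b set))"
    by (rule sum.union_disjoint) auto
  also have "\<dots> = (\<Sum>a\<in>UNIV. f (Inl a)) + (\<Sum>b\<in>UNIV. f (Inr b))"
    by (simp add: sum.reindex)
  finally show ?thesis .
qed

lemma block2_mult:
  fixes P Q :: "real^'n^'n"
  shows "block2 P Q *v v = vj (P *v vl v - Q *v vr v) (Q *v vl v + P *v vr v)"
  unfolding vec_eq_iff
proof
  fix i :: "'n + 'n"
  show "(block2 P Q *v v) $ i = vj (P *v vl v - Q *v vr v) (Q *v vl v + P *v vr v) $ i"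
    by (cases i) (simp_all add: matrix_vector_mult_def block2_def vj_def vl_def vr_def sum_UNIV_Plus
        sum_subtractf sum_negf)
qed

lemma vj_zero: "vj x y = 0 \<longleftrightarrow> x = 0 \<and> y = 0"
proof
  assume h: "vj x y = 0"
  have "x $ a = 0" for a using arg_cong[OF h, of "\<lambda>v. v $ Inl a"] by (simp add: vj_def)
  moreover have "y $ a = 0" for a using arg_cong[OF h, of "\<lambda>v. v $ Inr a"] by (simp add: vj_def)
  ultimately show "x = 0 \<and> y = 0" by (simp add: vec_eq_iff)
next
  assume "x = 0 \<and> y = 0"
  then show "vj x y = 0" by (simp add: vec_eq_iff vj_def split: sum.splits)
qed

lemma vl_vr_zero: "vl v = 0 \<Longrightarrow> vr v = 0 \<Longrightarrow> v = 0"
  unfolding vec_eq_iff vl_def vr_def by (metis sum.exhaust vec_lambda_beta zero_index)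

lemma vl_vj [simp]: "vl (vj x y) = x" and vr_vj [simp]: "vr (vj x y) = y"
  by (simp_all add: vec_eq_iff vl_def vr_def vj_def)

lemma det0_kernel:
  fixes M :: "real^'m^'m"
  assumes "det M = 0" shows "\<exists>v. v \<noteq> 0 \<and> M *v v = 0"
proof -
  have "\<not> invertible M" using assms by (simp add: invertible_det_nz)
  then have "\<not> (\<forall>x. M *v x = 0 \<longrightarrow> x = 0)"
    by (simp add: invertible_left_inverse matrix_left_invertible_ker)
  then show ?thesis by blast
qed

lemma kernel_det0:
  fixes M :: "real^'m^'m"
  assumes "M *v v = 0" "v \<noteq> 0" shows "det M = 0"
proof (rule ccontr)
  assume "det M \<noteq> 0"
  then have "invertible M" by (simp add: invertible_det_nz)
  then have "\<forall>x. M *v x = 0 \<longrightarrow> x = 0"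
    by (simp add: invertible_left_inverse matrix_left_invertible_ker)
  then show False using assms by blast
qed

lemma Xk_mult: "Xk A B \<tau> T k *v x = A *v x + cos (lam T k * \<tau>) *\<^sub>R (B *v x)"
  by (simp add: Xk_def matrix_vector_mult_add_rdistrib scaleR_matrix_vector_assoc[symmetric])
lemma Yk_mult: "Yk A B \<tau> T k *v x = lam T k *\<^sub>R x + sin (lam T k * \<tau>) *\<^sub>R (B *v x)"
  by (simp add: Yk_def matrix_vector_mult_add_rdistrib scaleR_matrix_vector_assoc[symmetric])

lemma sol_from_xy:
  fixes A B :: "real^'n^'n" and x y :: "real^'n"
  assumes h1: "Xk A B \<tau> T k *v x - Yk A B \<tau> T k *v y = 0"
    and h2: "Yk A B \<tau> T k *v x + Xk A B \<tau> T k *v y = 0"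
    and x0: "x \<noteq> 0" and T: "T > 0"
  shows "\<exists>u :: real \<Rightarrow> real^'n.
              (\<forall>t. (u has_vector_derivative (A *v u t + B *v u (t - \<tau>))) (at t))
            \<and> (\<forall>t. u (t + T) = u t)
            \<and> (\<exists>t. u t \<noteq> 0)"
proof -
  define l where "l = lam T k"
  define c where "c = cos (l * \<tau>)"
  define s where "s = sin (l * \<tau>)"
  have e1: "A *v x + c *\<^sub>R (B *v x) - (l *\<^sub>R y + s *\<^sub>R (B *v y)) = 0"
    using h1 by (simp add: Xk_mult Yk_mult l_def c_def s_def)
  have e2: "l *\<^sub>R x + s *\<^sub>R (B *v x) + (A *v y + c *\<^sub>R (B *v y)) = 0"
    using h2 by (simp add: Xk_mult Yk_mult l_def c_def s_def)
  define u where "u t = cos (l*t) *\<^sub>R x + sin (l*t) *\<^sub>R y" for t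
  have der: "(u has_vector_derivative ((- (l * sin (l*t))) *\<^sub>R x + (l * cos (l*t)) *\<^sub>R y)) (at t)" for t
    unfolding u_def by (auto intro!: derivative_eq_intros simp: mult.commute)
  have eq: "(- (l * sin (l*t))) *\<^sub>R x + (l * cos (l*t)) *\<^sub>R y = A *v u t + B *v u (t - \<tau>)" for t
  proof -
    have cd: "cos (l*(t-\<tau>)) = cos(l*t) * c + sin(l*t) * s" by (simp add: c_def s_def right_diff_distrib cos_diff)
    have sd: "sin (l*(t-\<tau>)) = sin(l*t) * c - cos(l*t) * s" by (simp add: c_def s_def right_diff_distrib sin_diff)
    show ?thesis unfolding vec_eq_iff
    proof
      fix i
      have a1: "(A *v x)$i + c * (B *v x)$i - (l * y$i + s * (B*v y)$i) = 0"
        using arg_cong[OF e1, of "\<lambda>v. v$i"] by simp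
      have a2: "l * x$i + s * (B *v x)$i + ((A *v y)$i + c * (B *v y)$i) = 0"
        using arg_cong[OF e2, of "\<lambda>v. v$i"] by simp
      show "((- (l * sin (l*t))) *\<^sub>R x + (l * cos (l*t)) *\<^sub>R y) $ i = (A *v u t + B *v u (t - \<tau>)) $ i"
        unfolding u_def cd sd
        apply (simp add: matrix_vector_right_distrib matrix_vector_mult_scaleR)
        using a1 a2 by algebra
    qed
  qed
  have lT: "l * T = 2 * real k * pi" using T by (simp add: l_def lam_def)
  have per: "u (t + T) = u t" for t
  proof -
    have "l * (t + T) = l * t + 2 * real k * pi" by (simp add: distrib_left lT)
    then show ?thesis by (simp add: u_def cos_add sin_add)
  qed
  have "u 0 \<noteq> 0" using x0 by (simp add: u_def)
  then show ?thesis using der eq per by (intro exI[of _ u]) auto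
qed

lemma mvc: "continuous_on S g \<Longrightarrow> continuous_on S (\<lambda>t. (A::real^'n^'m) *v g t)"
  by (rule continuous_on_compose2[OF matrix_vector_mult_linear_continuous_on]) auto

lemma cintv: "continuous_on UNIV (g::real \<Rightarrow> 'a::euclidean_space) \<Longrightarrow> g integrable_on {a..b}"
  by (rule integrable_continuous_real) (use continuous_on_subset in blast)

lemma ftc_prod:
  fixes u F :: "real \<Rightarrow> 'a::banach"
  assumes der: "\<And>t. (u has_vector_derivative F t) (at t)"
    and dphi: "\<And>t. (phi has_real_derivative phi' t) (at t)" and ab: "a \<le> b"
  shows "((\<lambda>t. phi t *\<^sub>R F t + phi' t *\<^sub>R u t) has_integral (phi b *\<^sub>R u b - phi a *\<^sub>R u a)) {a..b}"
proof (rule fundamental_theorem_of_calculus[OF ab])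
  fix t assume "t \<in> {a..b}"
  show "((\<lambda>t. phi t *\<^sub>R u t) has_vector_derivative phi t *\<^sub>R F t + phi' t *\<^sub>R u t) (at t within {a..b})"
    by (rule has_vector_derivative_scaleR)
       (rule has_field_derivative_at_within[OF dphi], rule has_vector_derivative_at_within[OF der])
qed

lemma coef_eqs:
  fixes A B :: "real^'n^'n" and u :: "real \<Rightarrow> real^'n"
  assumes der: "\<forall>t. (u has_vector_derivative (A *v u t + B *v u (t - \<tau>))) (at t)"
    and per: "\<forall>t. u (t + T) = u t" and T: "T > 0"
  shows "Xk A B \<tau> T k *v integral {0..T} (\<lambda>t. cos (lam T k * t) *\<^sub>R u t)
           - Yk A B \<tau> T k *v integral {0..T} (\<lambda>t. sin (lam T k * t) *\<^sub>R u t) = 0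
       \<and> Yk A B \<tau> T k *v integral {0..T} (\<lambda>t. cos (lam T k * t) *\<^sub>R u t)
           + Xk A B \<tau> T k *v integral {0..T} (\<lambda>t. sin (lam T k * t) *\<^sub>R u t) = 0"
proof -
  define l where "l = lam T k"
  define c where "c = cos (l * \<tau>)"
  define s where "s = sin (l * \<tau>)"
  define C where "C = integral {0..T} (\<lambda>t. cos (l * t) *\<^sub>R u t)"
  define S where "S = integral {0..T} (\<lambda>t. sin (l * t) *\<^sub>R u t)"
  define F where "F t = A *v u t + B *v u (t - \<tau>)" for t
  have derF: "(u has_vector_derivative F t) (at t)" for t using der by (simp add: F_def)
  have uc: "continuous_on UNIV u"
    by (rule continuous_at_imp_continuous_on) (use derF has_vector_derivative_continuous in blast)
  have ucs: "continuous_on UNIV (\<lambda>t. u (t - \<tau>))"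
    by (rule continuous_on_compose2[OF uc]) (auto intro: continuous_intros)
  have Fc: "continuous_on UNIV F" unfolding F_def by (intro continuous_intros mvc uc ucs)
  have pu: "\<And>x. u (x + T) = u x" using per by simp
  have lT: "l * T = 2 * real k * pi" using T by (simp add: l_def lam_def)
  have uT: "u T = u 0" using pu[of 0] by simp
  have shift: "integral {0..T} (\<lambda>t. phi (l * t) *\<^sub>R u (t - \<tau>)) = integral {0..T} (\<lambda>t. phi (l * (t + \<tau>)) *\<^sub>R u t)"
    if phic: "continuous_on UNIV phi" and phip: "\<And>x. phi (x + 2 * real k * pi) = phi x" for phi :: "real \<Rightarrow> real"
  proof -
    define g where "g t = phi (l * (t + \<tau>)) *\<^sub>R u t" for t
    have gc: "continuous_on UNIV g" unfolding g_def
      by (intro continuous_intros uc continuous_on_compose2[OF phic]) auto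
    have gp: "g (x + T) = g x" for x
    proof -
      have "l * (x + T + \<tau>) = l * (x + \<tau>) + l * T" by (simp add: algebra_simps)
      then have "l * (x + T + \<tau>) = l * (x + \<tau>) + 2 * real k * pi" unfolding lT .
      then show ?thesis unfolding g_def using phip pu by simp
    qed
    have "integral {- \<tau> - - \<tau>..(T - \<tau>) - - \<tau>} (\<lambda>x. g (x + - \<tau>)) = integral {- \<tau>..T - \<tau>} g"
      by (rule integral_shift_real_ivl)
    also have "\<dots> = integral {- \<tau>..- \<tau> + T} g" by simp
    also have "\<dots> = integral {0..T} g" by (rule per_integral[OF gc gp T])
    finally show ?thesis unfolding g_def by simp
  qed
  have cp: "cos (x + 2 * real k * pi) = cos x" for x by (simp add: cos_add)
  have sp: "sin (x + 2 * real k * pi) = sin x" for x by (simp add: sin_add)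
  have Dc: "integral {0..T} (\<lambda>t. cos (l * t) *\<^sub>R u (t - \<tau>)) = c *\<^sub>R C - s *\<^sub>R S"
  proof -
    have "integral {0..T} (\<lambda>t. cos (l * t) *\<^sub>R u (t - \<tau>)) = integral {0..T} (\<lambda>t. cos (l * (t + \<tau>)) *\<^sub>R u t)"
      by (rule shift) (auto intro: continuous_intros cp)
    also have "\<dots> = integral {0..T} (\<lambda>t. c *\<^sub>R (cos (l * t) *\<^sub>R u t) - s *\<^sub>R (sin (l * t) *\<^sub>R u t))"
      by (rule integral_cong) (simp add: c_def s_def distrib_left cos_add algebra_simps)
    also have "\<dots> = c *\<^sub>R C - s *\<^sub>R S" unfolding C_def S_def
      by (subst integral_diff) (auto intro!: cintv continuous_intros uc simp del: scaleR_scaleR)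
    finally show ?thesis .
  qed
  have Ds: "integral {0..T} (\<lambda>t. sin (l * t) *\<^sub>R u (t - \<tau>)) = c *\<^sub>R S + s *\<^sub>R C"
  proof -
    have "integral {0..T} (\<lambda>t. sin (l * t) *\<^sub>R u (t - \<tau>)) = integral {0..T} (\<lambda>t. sin (l * (t + \<tau>)) *\<^sub>R u t)"
      by (rule shift) (auto intro: continuous_intros sp)
    also have "\<dots> = integral {0..T} (\<lambda>t. c *\<^sub>R (sin (l * t) *\<^sub>R u t) + s *\<^sub>R (cos (l * t) *\<^sub>R u t))"
      by (rule integral_cong) (simp add: c_def s_def distrib_left sin_add algebra_simps)
    also have "\<dots> = c *\<^sub>R S + s *\<^sub>R C" unfolding C_def S_def
      by (subst Henstock_Kurzweil_Integration.integral_add) (auto intro!: cintv continuous_intros uc simp del: scaleR_scaleR)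
    finally show ?thesis .
  qed
  have IF: "integral {0..T} (\<lambda>t. phi t *\<^sub>R F t) =
       A *v integral {0..T} (\<lambda>t. phi t *\<^sub>R u t) + B *v integral {0..T} (\<lambda>t. phi t *\<^sub>R u (t - \<tau>))"
    if phic: "continuous_on UNIV phi" for phi :: "real \<Rightarrow> real"
  proof -
    have i1: "(\<lambda>t. phi t *\<^sub>R u t) integrable_on {0..T}" by (intro cintv continuous_intros uc phic)
    have i2: "(\<lambda>t. phi t *\<^sub>R u (t - \<tau>)) integrable_on {0..T}" by (intro cintv continuous_intros ucs phic)
    have "integral {0..T} (\<lambda>t. phi t *\<^sub>R F t) =
        integral {0..T} (\<lambda>t. A *v (phi t *\<^sub>R u t) + B *v (phi t *\<^sub>R u (t - \<tau>)))"
      by (rule integral_cong) (simp add: F_def algebra_simps)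
    also have "\<dots> = integral {0..T} (\<lambda>t. A *v (phi t *\<^sub>R u t)) + integral {0..T} (\<lambda>t. B *v (phi t *\<^sub>R u (t - \<tau>)))"
      by (rule Henstock_Kurzweil_Integration.integral_add) (intro cintv mvc continuous_intros uc ucs phic)+
    also have "integral {0..T} (\<lambda>t. A *v (phi t *\<^sub>R u t)) = A *v integral {0..T} (\<lambda>t. phi t *\<^sub>R u t)"
      using integral_linear[OF i1 matrix_vector_mul_bounded_linear[of A]] by (simp add: o_def)
    also have "integral {0..T} (\<lambda>t. B *v (phi t *\<^sub>R u (t - \<tau>))) = B *v integral {0..T} (\<lambda>t. phi t *\<^sub>R u (t - \<tau>))"
      using integral_linear[OF i2 matrix_vector_mul_bounded_linear[of B]] by (simp add: o_def)
    finally show ?thesis .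
  qed
  have f1: "((\<lambda>t. cos (l * t) *\<^sub>R F t + (- (sin (l * t) * l)) *\<^sub>R u t) has_integral (cos (l * T) *\<^sub>R u T - cos (l * 0) *\<^sub>R u 0)) {0..T}"
    by (rule ftc_prod[OF derF]) (auto intro!: derivative_eq_intros simp: T less_imp_le)
  have f2: "((\<lambda>t. sin (l * t) *\<^sub>R F t + (cos (l * t) * l) *\<^sub>R u t) has_integral (sin (l * T) *\<^sub>R u T - sin (l * 0) *\<^sub>R u 0)) {0..T}"
    by (rule ftc_prod[OF derF]) (auto intro!: derivative_eq_intros simp: T less_imp_le)
  have z1: "integral {0..T} (\<lambda>t. cos (l * t) *\<^sub>R F t) + (- l) *\<^sub>R S = 0"
  proof -
    have "integral {0..T} (\<lambda>t. cos (l * t) *\<^sub>R F t + (- (sin (l * t) * l)) *\<^sub>R u t) = 0"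
      using integral_unique[OF f1] uT lT by simp
    moreover have "integral {0..T} (\<lambda>t. cos (l * t) *\<^sub>R F t + (- (sin (l * t) * l)) *\<^sub>R u t) =
        integral {0..T} (\<lambda>t. cos (l * t) *\<^sub>R F t) + integral {0..T} (\<lambda>t. (- l) *\<^sub>R (sin (l * t) *\<^sub>R u t))"
      by (subst Henstock_Kurzweil_Integration.integral_add[symmetric]) (auto intro!: cintv continuous_intros uc Fc integral_cong)
    ultimately show ?thesis unfolding S_def by (simp del: scaleR_scaleR)
  qed
  have z2: "integral {0..T} (\<lambda>t. sin (l * t) *\<^sub>R F t) + l *\<^sub>R C = 0"
  proof -
    have "integral {0..T} (\<lambda>t. sin (l * t) *\<^sub>R F t + (cos (l * t) * l) *\<^sub>R u t) = 0"
      using integral_unique[OF f2] uT lT by simp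
    moreover have "integral {0..T} (\<lambda>t. sin (l * t) *\<^sub>R F t + (cos (l * t) * l) *\<^sub>R u t) =
        integral {0..T} (\<lambda>t. sin (l * t) *\<^sub>R F t) + integral {0..T} (\<lambda>t. l *\<^sub>R (cos (l * t) *\<^sub>R u t))"
      by (subst Henstock_Kurzweil_Integration.integral_add[symmetric]) (auto intro!: cintv continuous_intros uc Fc integral_cong)
    ultimately show ?thesis unfolding C_def by (simp del: scaleR_scaleR)
  qed
  have E1: "A *v C + B *v (c *\<^sub>R C - s *\<^sub>R S) + (- l) *\<^sub>R S = 0"
    using z1 IF[of "\<lambda>t. cos (l * t)"] Dc unfolding C_def by (simp add: continuous_intros)
  have E2: "A *v S + B *v (c *\<^sub>R S + s *\<^sub>R C) + l *\<^sub>R C = 0"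
    using z2 IF[of "\<lambda>t. sin (l * t)"] Ds unfolding S_def by (simp add: continuous_intros)
  have "Xk A B \<tau> T k *v C - Yk A B \<tau> T k *v S = 0"
    using E1 unfolding c_def s_def by (simp add: Xk_mult Yk_mult l_def[symmetric] algebra_simps)
  moreover have "Yk A B \<tau> T k *v C + Xk A B \<tau> T k *v S = 0"
    using E2 unfolding c_def s_def by (simp add: Xk_mult Yk_mult l_def[symmetric] algebra_simps)
  ultimately show ?thesis unfolding C_def S_def l_def by (rule conjI)
qed


theorem mainTheorem5:
  fixes A B :: "real^'n^'n" and \<tau> T :: real
  assumes "\<tau> > 0" and "T > 0"
  shows "(\<not> (\<exists>u :: real \<Rightarrow> real^'n.
              (\<forall>t. (u has_vector_derivative (A *v u t + B *v u (t - \<tau>))) (at t))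
            \<and> (\<forall>t. u (t + T) = u t)
            \<and> (\<exists>t. u t \<noteq> 0)))
         \<longleftrightarrow> (\<forall>k::nat. hk A B \<tau> T k \<noteq> 0)"
proof
  assume H: "\<not> (\<exists>u :: real \<Rightarrow> real^'n.
              (\<forall>t. (u has_vector_derivative (A *v u t + B *v u (t - \<tau>))) (at t))
            \<and> (\<forall>t. u (t + T) = u t)
            \<and> (\<exists>t. u t \<noteq> 0))"
  show "\<forall>k::nat. hk A B \<tau> T k \<noteq> 0"
  proof
    fix k :: nat
    show "hk A B \<tau> T k \<noteq> 0"
    proof
      assume h0: "hk A B \<tau> T k = 0"
      obtain v where v: "v \<noteq> 0" "block2 (Xk A B \<tau> T k) (Yk A B \<tau> T k) *v v = 0"
        using det0_kernel[OF h0[unfolded hk_def]] by blast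
      have k1: "Xk A B \<tau> T k *v vl v - Yk A B \<tau> T k *v vr v = 0"
               "Yk A B \<tau> T k *v vl v + Xk A B \<tau> T k *v vr v = 0"
        using v(2) by (simp_all add: block2_mult vj_zero)
      show False
      proof (cases "vl v = 0")
        case False
        from sol_from_xy[OF k1 False assms(2)] H show False by blast
      next
        case True
        then have nz: "vr v \<noteq> 0" using v(1) vl_vr_zero by blast
        have k2: "Xk A B \<tau> T k *v vr v - Yk A B \<tau> T k *v 0 = 0"
                 "Yk A B \<tau> T k *v vr v + Xk A B \<tau> T k *v 0 = 0"
          using k1 True by simp_all
        from sol_from_xy[OF k2 nz assms(2)] H show False by blast
      qed
    qed
  qed
next
  assume H: "\<forall>k::nat. hk A B \<tau> T k \<noteq> 0"
  show "\<not> (\<exists>u :: real \<Rightarrow> real^'n.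
              (\<forall>t. (u has_vector_derivative (A *v u t + B *v u (t - \<tau>))) (at t))
            \<and> (\<forall>t. u (t + T) = u t)
            \<and> (\<exists>t. u t \<noteq> 0))"
  proof
    assume "\<exists>u :: real \<Rightarrow> real^'n.
              (\<forall>t. (u has_vector_derivative (A *v u t + B *v u (t - \<tau>))) (at t))
            \<and> (\<forall>t. u (t + T) = u t)
            \<and> (\<exists>t. u t \<noteq> 0)"
    then obtain u :: "real \<Rightarrow> real^'n" and t0 where
      der: "\<forall>t. (u has_vector_derivative (A *v u t + B *v u (t - \<tau>))) (at t)"
      and per: "\<forall>t. u (t + T) = u t" and t0: "u t0 \<noteq> 0" by blast
    have uc: "continuous_on UNIV u"
      by (rule continuous_at_imp_continuous_on) (use der has_vector_derivative_continuous in blast)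
    have CS0: "integral {0..T} (\<lambda>t. cos (lam T k * t) *\<^sub>R u t) = 0 \<and>
               integral {0..T} (\<lambda>t. sin (lam T k * t) *\<^sub>R u t) = 0" for k
    proof -
      from coef_eqs[OF der per assms(2), of k]
      have "block2 (Xk A B \<tau> T k) (Yk A B \<tau> T k) *v
              vj (integral {0..T} (\<lambda>t. cos (lam T k * t) *\<^sub>R u t)) (integral {0..T} (\<lambda>t. sin (lam T k * t) *\<^sub>R u t)) = 0"
        by (simp add: block2_mult vj_zero)
      then have "vj (integral {0..T} (\<lambda>t. cos (lam T k * t) *\<^sub>R u t)) (integral {0..T} (\<lambda>t. sin (lam T k * t) *\<^sub>R u t)) = 0"
        using H kernel_det0 unfolding hk_def by blast
      then show ?thesis by (simp add: vj_zero)
    qed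
    have z: "u t $ j = 0" for t j
    proof (rule fourier_unique[where T=T and w="\<lambda>t. u t $ j" and x=t])
      show "continuous_on UNIV (\<lambda>t. u t $ j)" by (intro continuous_intros uc)
      show "u (x + T) $ j = u x $ j" for x using per by simp
      show "T > 0" by (rule assms(2))
      fix k :: nat
      have ic: "(\<lambda>t. cos (lam T k * t) *\<^sub>R u t) integrable_on {0..T}" by (intro cintv continuous_intros uc)
      have "integral {0..T} (\<lambda>t. (cos (lam T k * t) *\<^sub>R u t) $ j) = integral {0..T} (\<lambda>t. cos (lam T k * t) *\<^sub>R u t) $ j"
        by (rule integral_component_eq_cart[OF ic])
      then show "integral {0..T} (\<lambda>t. u t $ j * cos (lam T k * t)) = 0"
        using CS0[of k] by (simp add: mult.commute)
      have isn: "(\<lambda>t. sin (lam T k * t) *\<^sub>R u t) integrable_on {0..T}" by (intro cintv continuous_intros uc)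
      have "integral {0..T} (\<lambda>t. (sin (lam T k * t) *\<^sub>R u t) $ j) = integral {0..T} (\<lambda>t. sin (lam T k * t) *\<^sub>R u t) $ j"
        by (rule integral_component_eq_cart[OF isn])
      then show "integral {0..T} (\<lambda>t. u t $ j * sin (lam T k * t)) = 0"
        using CS0[of k] by (simp add: mult.commute)
    qed
    then have "u t0 = 0" by (simp add: vec_eq_iff)
    then show False using t0 by simp
  qed
qed

end
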